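(* Let $k\geq3$, $A=\{0,1,\dots,k-1\}$, $N=k-1$ and let $T\colon A^{N^2}\to A$ be given by $T(x_{1,1},\dots,x_{1,N},\dots,x_{N,1},\dots,x_{N,N})=1$ if $x_{i,j}=i$ for all $i,j$ or $x_{i,j}=j$ for all $i,j$, and $0$ otherwise. For $j\in A$ and $a\in A$ let $u_{j,a}\colon A\to A$ be given by $u_{j,a}(x)=a$ if $x=j$ and $u_{j,a}(x)=0$ otherwise. Then \[\{T\}^{*(1)}\supseteq\{u_{j,a} : a\in A,\ j\in A\setminus\{0,1\}\}.\]
   Context: An $m$-ary $g$ commutes with an $n$-ary $h$ if $g\bigl((h((x_{ij})_{j}))_{i}\bigr)=h\bigl((g((x_{ij})_{i}))_{j}\bigr)$ for all $(x_{ij})\in A^{m\times n}$. For $F$ a set of finitary operations on $A$, $F^*$ is the set of all finitary operations of positive arity commuting with every member of $F$, and $F^{*(1)}$ is the set of unary members of $F^*$. *)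

theory Defs
  imports Main
begin

text \<open>Finitary operations on a carrier A (a set of naturals) are represented as pairs
  (arity m, f) with f :: nat list \<Rightarrow> nat; f is applied to argument lists of length m.\<close>

definition is_op :: "nat set \<Rightarrow> nat \<Rightarrow> (nat list \<Rightarrow> nat) \<Rightarrow> bool" where
  "is_op A m f \<longleftrightarrow> (\<forall>xs. length xs = m \<and> set xs \<subseteq> A \<longrightarrow> f xs \<in> A)"

definition commutes :: "nat set \<Rightarrow> nat \<Rightarrow> (nat list \<Rightarrow> nat) \<Rightarrow> nat \<Rightarrow> (nat list \<Rightarrow> nat) \<Rightarrow> bool" where
  "commutes A m g n h \<longleftrightarrow>
     (\<forall>x :: nat \<Rightarrow> nat \<Rightarrow> nat. (\<forall>i<m. \<forall>j<n. x i j \<in> A) \<longrightarrow>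
        g (map (\<lambda>i. h (map (\<lambda>j. x i j) [0..<n])) [0..<m])
      = h (map (\<lambda>j. g (map (\<lambda>i. x i j) [0..<m])) [0..<n]))"

definition centralizer :: "nat set \<Rightarrow> (nat \<times> (nat list \<Rightarrow> nat)) set \<Rightarrow> (nat \<times> (nat list \<Rightarrow> nat)) set" where
  "centralizer A F = {(m, g). 0 < m \<and> is_op A m g \<and> (\<forall>(n, h) \<in> F. commutes A m g n h)}"

definition centralizer1 :: "nat set \<Rightarrow> (nat \<times> (nat list \<Rightarrow> nat)) set \<Rightarrow> (nat \<times> (nat list \<Rightarrow> nat)) set" where
  "centralizer1 A F = {(m, g) \<in> centralizer A F. m = 1}"

text \<open>The N^2-ary operation T with N = k - 1; arguments ordered
  x_{1,1},...,x_{1,N},...,x_{N,1},...,x_{N,N}, so x_{i,j} = xs ! ((i-1)*N + (j-1)).\<close>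
definition opT :: "nat \<Rightarrow> nat list \<Rightarrow> nat" where
  "opT k xs = (let N = k - 1 in
     if (\<forall>i\<in>{1..N}. \<forall>j\<in>{1..N}. xs ! ((i - 1) * N + (j - 1)) = i)
      \<or> (\<forall>i\<in>{1..N}. \<forall>j\<in>{1..N}. xs ! ((i - 1) * N + (j - 1)) = j)
     then 1 else 0)"

definition u :: "nat \<Rightarrow> nat \<Rightarrow> nat \<Rightarrow> nat" where
  "u j a x = (if x = j then a else 0)"

end

theory Submission
  imports Defs
begin

lemma opT_zero:
  fixes k a :: nat and ys :: "nat list"
  assumes k: "k \<ge> 3" and len: "length ys = (k-1)^2"
    and vals: "\<forall>y\<in>set ys. y = 0 \<or> y = a"
  shows "opT k ys = 0"
proof (rule ccontr)
  assume "opT k ys \<noteq> 0"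
  define N where "N = k - 1"
  have N2: "N \<ge> 2" using k N_def by simp
  have lenN: "length ys = N * N" using len N_def by (simp add: power2_eq_square)
  have "N * 1 < N * N" using N2 by (intro mult_strict_left_mono) auto
  then have lt0: "0 < length ys" and lt1: "1 < length ys" and ltN: "N < length ys"
    using N2 lenN by linarith+
  have c: "(\<forall>i\<in>{1..N}. \<forall>j\<in>{1..N}. ys ! ((i - 1) * N + (j - 1)) = i)
      \<or> (\<forall>i\<in>{1..N}. \<forall>j\<in>{1..N}. ys ! ((i - 1) * N + (j - 1)) = j)"
    using \<open>opT k ys \<noteq> 0\<close> unfolding opT_def Let_def N_def by (auto split: if_splits)
  have "ys ! 0 = 1 \<and> (ys ! N = 2 \<or> ys ! 1 = 2)"
  proof (rule disjE[OF c])
    assume h: "\<forall>i\<in>{1..N}. \<forall>j\<in>{1..N}. ys ! ((i - 1) * N + (j - 1)) = i"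
    have "ys ! 0 = 1" using h[rule_format, of 1 1] N2 by simp
    moreover have "ys ! N = 2" using h[rule_format, of 2 1] N2 by simp
    ultimately show ?thesis by simp
  next
    assume h: "\<forall>i\<in>{1..N}. \<forall>j\<in>{1..N}. ys ! ((i - 1) * N + (j - 1)) = j"
    have "ys ! 0 = 1" using h[rule_format, of 1 1] N2 by simp
    moreover have "ys ! 1 = 2" using h[rule_format, of 1 2] N2 by simp
    ultimately show ?thesis by simp
  qed
  moreover have "ys ! 0 = 0 \<or> ys ! 0 = a" "ys ! N = 0 \<or> ys ! N = a" "ys ! 1 = 0 \<or> ys ! 1 = a"
    using lt0 lt1 ltN vals nth_mem by blast+
  ultimately show False by auto
qed

theorem corollary3p3:
  fixes k :: nat
  assumes "k \<ge> 3"
  shows "{(1, \<lambda>xs. u j a (xs ! 0)) | j a. a \<in> {0..<k} \<and> j \<in> {0..<k} - {0, 1}}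
           \<subseteq> centralizer1 {0..<k} {((k - 1)^2, opT k)}"
proof
  fix p :: "nat \<times> (nat list \<Rightarrow> nat)" assume "p \<in> {(1, \<lambda>xs. u j a (xs ! 0)) | j a. a \<in> {0..<k} \<and> j \<in> {0..<k} - {0, 1}}"
  then obtain j a where p: "p = (1, \<lambda>xs. u j a (xs ! 0))" and a: "a < k" and j: "j \<noteq> 0" "j \<noteq> 1"
    by auto
  have op: "is_op {0..<k} 1 (\<lambda>xs. u j a (xs ! 0))"
    unfolding is_op_def u_def using a assms by auto
  have com: "commutes {0..<k} 1 (\<lambda>xs. u j a (xs ! 0)) ((k - 1)^2) (opT k)"
    unfolding commutes_def
  proof (intro allI impI)
    fix x :: "nat \<Rightarrow> nat \<Rightarrow> nat"
    have lhs: "u j a (opT k (map (x 0) [0..<(k-1)^2])) = 0"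
    proof -
      have "opT k (map (x 0) [0..<(k-1)^2]) \<in> {0,1}" unfolding opT_def Let_def by simp
      then show ?thesis unfolding u_def using j by auto
    qed
    have rhs: "opT k (map (\<lambda>jj. u j a (x 0 jj)) [0..<(k-1)^2]) = 0"
      by (rule opT_zero[OF assms, of _ a]) (auto simp: u_def)
    show "u j a (map (\<lambda>i. opT k (map (x i) [0..<(k - 1)^2])) [0..<1] ! 0) =
          opT k (map (\<lambda>jj. u j a (map (\<lambda>i. x i jj) [0..<1] ! 0)) [0..<(k - 1)^2])"
      using lhs rhs by simp
  qed
  show "p \<in> centralizer1 {0..<k} {((k - 1)^2, opT k)}"
    unfolding p centralizer1_def centralizer_def using op com by auto
qed

end
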